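(* Let $G=(V,E)$ be a connected simple graph with a set-valued metric $\Omega(-,-)$ taking values in subsets of a finite set $\Omega$, and let $v\mapsto -v$ be an involution on $V$ which is both equivariant and a graph automorphism of $G$. If $V$ contains an $\Omega$-accessible vertex $x_0$, then the diameter of $G$ is exactly $|\Omega|$.
   Context: For a connected simple graph $G=(V,E)$ and a set $\Omega$, a set-valued metric on $G$ is a function $\Omega(-,-):V\times V\to 2^{\Omega}$ such that $\Omega(x,y)=\Omega(y,x)$ for all $x,y$; $|\Omega(x,y)|=1$ whenever $\{x,y\}\in E$; and $\Omega(x,z)=\Omega(x,y)\triangle\Omega(y,z)$ for all $x,y,z$, where $\triangle$ is symmetric difference. An involution $x\mapsto -x$ on $V$ is equivariant if $\Omega(x,-y)=\Omega\setminus\Omega(x,y)$ for all $x,y$; it is a graph automorphism if it maps edges to edges. A vertex $x_0$ is $\Omega$-accessible if $d_G(x_0,y)=|\Omega(x_0,y)|$ for every $y\in V$, where $d_G$ is graph distance. *)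

theory Defs
  imports Main "HOL-Library.Extended_Nat"
begin

definition simple_graph :: "'a set \<Rightarrow> ('a \<Rightarrow> 'a \<Rightarrow> bool) \<Rightarrow> bool" where
  "simple_graph V E \<longleftrightarrow> (\<forall>x y. E x y \<longrightarrow> x \<in> V \<and> y \<in> V) \<and>
     (\<forall>x y. E x y \<longrightarrow> E y x) \<and> (\<forall>x. \<not> E x x)"

definition walk :: "('a \<Rightarrow> 'a \<Rightarrow> bool) \<Rightarrow> 'a \<Rightarrow> 'a \<Rightarrow> nat \<Rightarrow> bool" where
  "walk E x y n \<longleftrightarrow> (\<exists>p. p 0 = x \<and> p n = y \<and> (\<forall>i<n. E (p i) (p (Suc i))))"

definition connected_graph :: "'a set \<Rightarrow> ('a \<Rightarrow> 'a \<Rightarrow> bool) \<Rightarrow> bool" where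
  "connected_graph V E \<longleftrightarrow> V \<noteq> {} \<and> (\<forall>x\<in>V. \<forall>y\<in>V. \<exists>n. walk E x y n)"

definition graph_dist :: "('a \<Rightarrow> 'a \<Rightarrow> bool) \<Rightarrow> 'a \<Rightarrow> 'a \<Rightarrow> nat" where
  "graph_dist E x y = (LEAST n. walk E x y n)"

text \<open>Diameter: supremum of distances between vertices (in enat, to allow infinite graphs).\<close>
definition diameter :: "'a set \<Rightarrow> ('a \<Rightarrow> 'a \<Rightarrow> bool) \<Rightarrow> enat" where
  "diameter V E = (SUP x\<in>V. SUP y\<in>V. enat (graph_dist E x y))"

definition set_valued_metric ::
  "'a set \<Rightarrow> ('a \<Rightarrow> 'a \<Rightarrow> bool) \<Rightarrow> 'b set \<Rightarrow> ('a \<Rightarrow> 'a \<Rightarrow> 'b set) \<Rightarrow> bool" where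
  "set_valued_metric V E \<Omega> M \<longleftrightarrow>
     (\<forall>x\<in>V. \<forall>y\<in>V. M x y \<subseteq> \<Omega>) \<and>
     (\<forall>x\<in>V. \<forall>y\<in>V. M x y = M y x) \<and>
     (\<forall>x y. E x y \<longrightarrow> card (M x y) = 1) \<and>
     (\<forall>x\<in>V. \<forall>y\<in>V. \<forall>z\<in>V. M x z = M x y \<union> M y z - (M x y \<inter> M y z))"

definition involution_on :: "'a set \<Rightarrow> ('a \<Rightarrow> 'a) \<Rightarrow> bool" where
  "involution_on V neg \<longleftrightarrow> (\<forall>x\<in>V. neg x \<in> V \<and> neg (neg x) = x)"

definition equivariant ::
  "'a set \<Rightarrow> 'b set \<Rightarrow> ('a \<Rightarrow> 'a \<Rightarrow> 'b set) \<Rightarrow> ('a \<Rightarrow> 'a) \<Rightarrow> bool" where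
  "equivariant V \<Omega> M neg \<longleftrightarrow> (\<forall>x\<in>V. \<forall>y\<in>V. M x (neg y) = \<Omega> - M x y)"

definition graph_automorphism_map :: "('a \<Rightarrow> 'a \<Rightarrow> bool) \<Rightarrow> ('a \<Rightarrow> 'a) \<Rightarrow> bool" where
  "graph_automorphism_map E neg \<longleftrightarrow> (\<forall>x y. E x y \<longrightarrow> E (neg x) (neg y))"

definition accessible ::
  "'a set \<Rightarrow> ('a \<Rightarrow> 'a \<Rightarrow> bool) \<Rightarrow> ('a \<Rightarrow> 'a \<Rightarrow> 'b set) \<Rightarrow> 'a \<Rightarrow> bool" where
  "accessible V E M x0 \<longleftrightarrow> (\<forall>y\<in>V. graph_dist E x0 y = card (M x0 y))"

end

theory Submission
  imports Defs
begin

lemma walk_concat: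
  assumes "walk E x y m" "walk E y z n" shows "walk E x z (m+n)"
proof -
  from assms obtain p q where p: "p 0 = x" "p m = y" "\<forall>i<m. E (p i) (p (Suc i))"
    and q: "q 0 = y" "q n = z" "\<forall>i<n. E (q i) (q (Suc i))" unfolding walk_def by blast
  define r where "r i = (if i \<le> m then p i else q (i - m))" for i
  have "\<forall>i<m+n. E (r i) (r (Suc i))"
  proof (intro allI impI)
    fix i assume i: "i < m+n"
    show "E (r i) (r (Suc i))"
    proof (cases "i < m")
      case True thus ?thesis using p by (simp add: r_def)
    next
      case False
      hence "Suc i - m = Suc (i - m)" by simp
      thus ?thesis using False q p i by (auto simp: r_def)
    qed
  qed
  moreover have "r 0 = x" "r (m+n) = z" using p q by (auto simp: r_def)
  ultimately show ?thesis unfolding walk_def by blast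
qed

lemma walk_rev:
  assumes "\<forall>x y. E x y \<longrightarrow> E y x" "walk E x y n" shows "walk E y x n"
proof -
  from assms obtain p where p: "p 0 = x" "p n = y" "\<forall>i<n. E (p i) (p (Suc i))"
    unfolding walk_def by blast
  define r where "r i = p (n - i)" for i
  have "\<forall>i<n. E (r i) (r (Suc i))"
  proof (intro allI impI)
    fix i assume i: "i < n"
    have "E (p (n - Suc i)) (p (Suc (n - Suc i)))" using p i by simp
    moreover have "Suc (n - Suc i) = n - i" using i by simp
    ultimately show "E (r i) (r (Suc i))" using assms(1) by (simp add: r_def)
  qed
  moreover have "r 0 = y" "r n = x" using p by (auto simp: r_def)
  ultimately show ?thesis unfolding walk_def by blast
qed

lemma walk_map:
  assumes "\<forall>x y. E x y \<longrightarrow> E (f x) (f y)" "walk E x y n" shows "walk E (f x) (f y) n"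
proof -
  from assms obtain p where p: "p 0 = x" "p n = y" "\<forall>i<n. E (p i) (p (Suc i))"
    unfolding walk_def by blast
  show ?thesis unfolding walk_def using p assms(1) by (intro exI[of _ "f \<circ> p"]) auto
qed

lemma dist_le: "walk E x y n \<Longrightarrow> graph_dist E x y \<le> n"
  unfolding graph_dist_def by (rule Least_le)

lemma dist_walk: "walk E x y n \<Longrightarrow> walk E x y (graph_dist E x y)"
  unfolding graph_dist_def by (rule LeastI)

theorem proposition3p12:
  fixes V :: "'a set" and E :: "'a \<Rightarrow> 'a \<Rightarrow> bool"
    and \<Omega> :: "'b set" and M :: "'a \<Rightarrow> 'a \<Rightarrow> 'b set" and neg :: "'a \<Rightarrow> 'a"
  assumes "simple_graph V E" and "connected_graph V E"
    and "finite \<Omega>"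
    and "set_valued_metric V E \<Omega> M"
    and "involution_on V neg"
    and "equivariant V \<Omega> M neg"
    and "graph_automorphism_map E neg"
    and "x0 \<in> V" and "accessible V E M x0"
  shows "diameter V E = enat (card \<Omega>)"
proof -
  have symE: "\<forall>x y. E x y \<longrightarrow> E y x" using assms(1) unfolding simple_graph_def by blast
  have autE: "\<forall>x y. E x y \<longrightarrow> E (neg x) (neg y)" using assms(7) unfolding graph_automorphism_map_def by blast
  have conn: "\<And>x y. x \<in> V \<Longrightarrow> y \<in> V \<Longrightarrow> walk E x y (graph_dist E x y)"
  proof -
    fix x y assume "x \<in> V" "y \<in> V"
    then obtain n where "walk E x y n" using assms(2) unfolding connected_graph_def by blast
    thus "walk E x y (graph_dist E x y)" by (rule dist_walk)
  qed
  have negV: "\<And>x. x \<in> V \<Longrightarrow> neg x \<in> V" and negneg: "\<And>x. x \<in> V \<Longrightarrow> neg (neg x) = x"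
    using assms(5) unfolding involution_on_def by auto
  have tri: "graph_dist E x z \<le> graph_dist E x y + graph_dist E y z"
    if "x \<in> V" "y \<in> V" "z \<in> V" for x y z
    by (rule dist_le, rule walk_concat[OF conn conn]) (use that in auto)
  have symd: "graph_dist E x y \<le> graph_dist E y x" if "x \<in> V" "y \<in> V" for x y
    by (rule dist_le, rule walk_rev[OF symE conn]) (use that in auto)
  have negd: "graph_dist E (neg x) (neg y) \<le> graph_dist E x y" if "x \<in> V" "y \<in> V" for x y
    by (rule dist_le, rule walk_map[OF autE conn]) (use that in auto)
  have sub: "\<And>x y. x \<in> V \<Longrightarrow> y \<in> V \<Longrightarrow> M x y \<subseteq> \<Omega>"
    using assms(4) unfolding set_valued_metric_def by (elim conjE) blast
  have acc: "\<And>y. y \<in> V \<Longrightarrow> graph_dist E x0 y = card (M x0 y)"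
    using assms(9) unfolding accessible_def by simp
  have eqv: "\<And>y. y \<in> V \<Longrightarrow> M x0 (neg y) = \<Omega> - M x0 y"
    using assms(6,8) unfolding equivariant_def by simp
  have cardle: "\<And>y. y \<in> V \<Longrightarrow> card (M x0 y) \<le> card \<Omega>"
    by (rule card_mono[OF assms(3) sub[OF assms(8)]])
  have accneg: "\<And>y. y \<in> V \<Longrightarrow> graph_dist E x0 (neg y) = card \<Omega> - card (M x0 y)"
  proof -
    fix y assume y: "y \<in> V"
    have "finite (M x0 y)" using sub[OF assms(8) y] assms(3) finite_subset by blast
    thus "graph_dist E x0 (neg y) = card \<Omega> - card (M x0 y)"
      using acc[OF negV[OF y]] eqv[OF y] sub[OF assms(8) y] card_Diff_subset by simp
  qed
  have bound: "graph_dist E x y \<le> card \<Omega>" if x: "x \<in> V" and y: "y \<in> V" for x y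
  proof -
    have a: "graph_dist E x y \<le> card (M x0 x) + card (M x0 y)"
      using tri[OF x assms(8) y] symd[OF x assms(8)] acc x y by simp
    have "graph_dist E x (neg x0) \<le> graph_dist E x0 (neg x)"
      using negd[OF negV[OF x] assms(8)] negneg[OF x] symd[OF negV[OF x] assms(8)] by simp
    moreover have "graph_dist E (neg x0) y \<le> graph_dist E x0 (neg y)"
      using negd[OF assms(8) negV[OF y]] negneg[OF y] by simp
    ultimately have b: "graph_dist E x y \<le> (card \<Omega> - card (M x0 x)) + (card \<Omega> - card (M x0 y))"
      using tri[OF x negV[OF assms(8)] y] accneg x y by simp
    show ?thesis using a b cardle[OF x] cardle[OF y] by linarith
  qed
  have "\<forall>x\<in>V. \<forall>y\<in>V. \<forall>z\<in>V. M x z = M x y \<union> M y z - (M x y \<inter> M y z)"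
    using assms(4) unfolding set_valued_metric_def by (elim conjE)
  hence "M x0 x0 = M x0 x0 \<union> M x0 x0 - (M x0 x0 \<inter> M x0 x0)" using assms(8) by blast
  hence M0: "M x0 x0 = {}" by simp
  have att: "graph_dist E x0 (neg x0) = card \<Omega>" using accneg[OF assms(8)] M0 by simp
  show ?thesis unfolding diameter_def
  proof (rule antisym)
    show "(SUP x\<in>V. SUP y\<in>V. enat (graph_dist E x y)) \<le> enat (card \<Omega>)"
      by (intro SUP_least) (simp add: bound)
    show "enat (card \<Omega>) \<le> (SUP x\<in>V. SUP y\<in>V. enat (graph_dist E x y))"
      by (rule SUP_upper2[OF assms(8)], rule SUP_upper2[OF negV[OF assms(8)]]) (simp add: att)
  qed
qed

end
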